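(* The PBW basis of the commutative operad $\operatorname{Com}$ obtained (by taking the elements represented by increasing chains) from the CL-labelling of the partition posets which labels the edge between $(A_1,\dots,A_p)$ and the partition obtained by merging $A_i$ and $A_j$ by $\max(\min A_i,\min A_j)$ is the basis consisting of the binary left combs whose leaves are labelled from left to right by $1,\dots,n$.
   Context: $\operatorname{Com}$ is the operad of commutative associative algebras, generated by one symmetric binary operation $\mu$; its operadic partition posets are the posets of set partitions of $\{1,\dots,n\}$ ordered by refinement. The maximal chains of these posets correspond to levelled binary trees (one merge per level), and the associated PBW basis consists of the elements of $\operatorname{Com}$ (written as shuffle trees in $\mu$) represented by the unique strictly increasing (lexicographically minimal) maximal chains for the labelling. A binary left comb is the tree $(\cdots((x_1\mu x_2)\mu x_3)\cdots)\mu x_n$. *)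

theory Defs
  imports Main
begin

text \<open>Binary trees in the single symmetric generator mu of Com; leaves are labelled by
  elements of {1..n}.\<close>
datatype tree = Leaf nat | Mu tree tree

text \<open>Shuffle-tree convention: the subtree containing the smaller minimal leaf is put on
  the left. Composing the trees f A and f B of two blocks A, B.\<close>
definition shuffle_mu :: "(nat set \<Rightarrow> tree) \<Rightarrow> nat set \<Rightarrow> nat set \<Rightarrow> tree" where
  "shuffle_mu f A B = (if Min A < Min B then Mu (f A) (f B) else Mu (f B) (f A))"

definition merge :: "nat set set \<Rightarrow> nat set \<Rightarrow> nat set \<Rightarrow> nat set set" where
  "merge P A B = (P - {A, B}) \<union> {A \<union> B}"

definition edge_label :: "nat set \<Rightarrow> nat set \<Rightarrow> nat" where
  "edge_label A B = max (Min A) (Min B)"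

text \<open>run P f w Q g: a saturated chain in the partition poset from P to Q (each step merges
  two distinct blocks, i.e. is a cover relation), whose sequence of edge labels is w;
  f assigns to each block of P its tree, and g the trees of the blocks of Q obtained by
  grafting along the chain (one merge per level).\<close>
inductive run :: "nat set set \<Rightarrow> (nat set \<Rightarrow> tree) \<Rightarrow> nat list \<Rightarrow> nat set set \<Rightarrow> (nat set \<Rightarrow> tree) \<Rightarrow> bool" where
  run_nil: "run P f [] P f"
| run_step: "\<lbrakk> A \<in> P; B \<in> P; A \<noteq> B;
     run (merge P A B) (f (A \<union> B := shuffle_mu f A B)) w Q g \<rbrakk>
   \<Longrightarrow> run P f (edge_label A B # w) Q g"

definition bot_part :: "nat \<Rightarrow> nat set set" where
  "bot_part n = (\<lambda>i. {i}) ` {1..n}"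

definition top_part :: "nat \<Rightarrow> nat set set" where
  "top_part n = {{1..n}}"

definition leaves :: "nat set \<Rightarrow> tree" where
  "leaves A = Leaf (Min A)"

definition pbw_basis :: "nat \<Rightarrow> tree set" where
  "pbw_basis n = {g {1..n} | w g. run (bot_part n) leaves w (top_part n) g \<and> sorted_wrt (<) w}"

definition left_comb :: "nat \<Rightarrow> tree" where
  "left_comb n = foldl (\<lambda>t i. Mu t (Leaf i)) (Leaf 1) [2..<n+1]"

end

theory Submission
  imports Defs
begin
definition PP :: "nat \<Rightarrow> nat \<Rightarrow> nat set set" where
  "PP k n = insert {1..k} ((\<lambda>i. {i}) ` {Suc k..n})"

lemma b0: "Suc k \<notin> {1..k}" by simp
lemma a2: "{Suc k} \<noteq> {1..k}" using b0[of k] by (metis singletonI)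
lemma Min1: "1 \<le> k \<Longrightarrow> Min {1..k} = (1::nat)" by (intro Min_eqI) auto
lemma a6: "(k::nat) < i \<Longrightarrow> {i} \<noteq> {1..k}"
proof
  assume "k < i" "{i} = {1..k}"
  then have "i \<in> {1..k}" by (metis singletonI)
  thus False using \<open>k < i\<close> by simp
qed
lemma a7: "1 \<le> k \<Longrightarrow> {1..k} \<union> {Suc k} = {1..Suc k}" by (simp add: atLeastAtMostSuc_conv)

lemma merge_sym: "merge P A B = merge P B A"
  unfolding merge_def by auto
lemma label_sym: "edge_label A B = edge_label B A"
  unfolding edge_label_def by auto

lemma run_mins:
  "run P f w Q g \<Longrightarrow> \<forall>X\<in>P. finite X \<and> X \<noteq> {} \<Longrightarrow> Min ` P \<subseteq> Min ` Q \<union> set w"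
proof (induction rule: run.induct)
  case (run_nil P f)
  then show ?case by auto
next
  case (run_step A P B f w Q g)
  have fin: "\<forall>X\<in>merge P A B. finite X \<and> X \<noteq> {}"
    using run_step.prems run_step.hyps(1,2) by (auto simp: merge_def)
  have IH: "Min ` merge P A B \<subseteq> Min ` Q \<union> set w" using run_step.IH fin by blast
  have "Min ` P \<subseteq> Min ` merge P A B \<union> {edge_label A B}"
  proof
    fix m assume "m \<in> Min ` P"
    then obtain X where X: "X \<in> P" "m = Min X" by auto
    have mu: "Min (A \<union> B) = min (Min A) (Min B)"
      using run_step.prems run_step.hyps(1,2) by (simp add: Min_Un)
    have AB: "A \<union> B \<in> merge P A B" by (simp add: merge_def)
    show "m \<in> Min ` merge P A B \<union> {edge_label A B}"
    proof (cases "X = A \<or> X = B")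
      case True
      then show ?thesis using X mu AB unfolding edge_label_def
        by (metis (no_types, lifting) Un_iff image_eqI insertI1 max_def min_def)
    next
      case False
      then have "X \<in> merge P A B" using X by (auto simp: merge_def)
      then show ?thesis using X by auto
    qed
  qed
  then show ?case using IH by auto
qed

lemma key_a:
  assumes j: "Suc k \<le> j" "j \<le> n" and k: "1 \<le> k"
    and lt: "\<forall>x\<in>set w. edge_label {1..k} {j} < x"
    and mins: "Min ` merge (PP k n) {1..k} {j} \<subseteq> insert 1 (set w)"
  shows "j = Suc k"
proof (rule ccontr)
  assume "j \<noteq> Suc k"
  hence jj: "Suc k < j" using j by simp
  have "{Suc k} \<in> (\<lambda>i. {i}) ` {Suc k..n}" using jj j by simp
  moreover have "{Suc k} \<noteq> {1..k}" "{Suc k} \<noteq> {j}" using jj a2 by simp_all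
  ultimately have "{Suc k} \<in> merge (PP k n) {1..k} {j}"
    unfolding merge_def PP_def by blast
  hence "Min {Suc k} \<in> Min ` merge (PP k n) {1..k} {j}" by (rule imageI)
  hence "Suc k \<in> insert 1 (set w)" using mins by (metis Min_singleton subsetD)
  hence "Suc k \<in> set w" using k by auto
  hence "edge_label {1..k} {j} < Suc k" using lt by auto
  moreover have "edge_label {1..k} {j} = j" unfolding edge_label_def using Min1[OF k] jj by simp
  ultimately show False using jj by simp
qed

lemma key_c:
  assumes ij: "Suc k \<le> i" "Suc k \<le> j" "i \<noteq> j" and k: "1 \<le> k"
    and lt: "\<forall>x\<in>set w. edge_label {i} {j} < x"
    and mins: "Min ` merge P {i} {j} \<subseteq> insert 1 (set w)"
  shows False
proof -
  have "{i} \<union> {j} \<in> merge P {i} {j}" unfolding merge_def by auto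
  hence "Min ({i} \<union> {j}) \<in> insert 1 (set w)" using mins by blast
  hence "min i j \<in> insert 1 (set w)" by (auto simp: min_def split: if_splits)
  hence "min i j \<in> set w" using k ij by auto
  hence "max i j < min i j" using lt unfolding edge_label_def by auto
  thus False by simp
qed

lemma key:
  assumes A: "A \<in> PP k n" and B: "B \<in> PP k n" and ne: "A \<noteq> B" and k: "1 \<le> k"
    and lt: "\<forall>x\<in>set w. edge_label A B < x"
    and mins: "Min ` merge (PP k n) A B \<subseteq> insert 1 (set w)"
  shows "(A = {1..k} \<and> B = {Suc k} \<or> A = {Suc k} \<and> B = {1..k}) \<and> Suc k \<le> n"
proof -
  consider "A = {1..k}" "B = {1..k}"
    | j where "A = {1..k}" "B = {j}" "Suc k \<le> j" "j \<le> n"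
    | j where "B = {1..k}" "A = {j}" "Suc k \<le> j" "j \<le> n"
    | i j where "A = {i}" "B = {j}" "Suc k \<le> i" "Suc k \<le> j"
    using A B unfolding PP_def by auto
  then show ?thesis
  proof cases
    case 1 then show ?thesis using ne by simp
  next
    case (2 j) then show ?thesis using key_a[of k j n w] lt mins k by auto
  next
    case (3 j)
    have "j = Suc k" using key_a[of k j n w] 3 lt mins k merge_sym[of "PP k n" A B] label_sym[of A B] by simp
    then show ?thesis using 3 by auto
  next
    case (4 i j) then show ?thesis using key_c[of k i j w] lt mins k ne by auto
  qed
qed

lemma left_comb_Suc: "1 \<le> k \<Longrightarrow> left_comb (Suc k) = Mu (left_comb k) (Leaf (Suc k))"
  unfolding left_comb_def by simp

lemma merge_PP: "1 \<le> k \<Longrightarrow> Suc k \<le> n \<Longrightarrow> merge (PP k n) {1..k} {Suc k} = PP (Suc k) n"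
proof -
  assume k: "1 \<le> k" and kn: "Suc k \<le> n"
  define X where "X = (\<lambda>i. {i}) ` {Suc (Suc k)..n}"
  have I: "{Suc k..n} = insert (Suc k) {Suc (Suc k)..n}" using kn by (simp add: atLeastAtMost_insertL)
  have P: "PP k n = insert {1..k} (insert {Suc k} X)" unfolding PP_def X_def I by simp
  have n1: "{1..k} \<notin> X"
  proof
    assume "{1..k} \<in> X"
    then obtain i where "i \<in> {Suc (Suc k)..n}" "{1..k} = {i}" unfolding X_def by blast
    then show False using a6[of k i] by simp
  qed
  have n2: "{Suc k} \<notin> X" unfolding X_def by auto
  have "merge (PP k n) {1..k} {Suc k} = insert ({1..k} \<union> {Suc k}) X"
    unfolding merge_def P using n1 n2 a2[of k] by blast
  also have "\<dots> = PP (Suc k) n" unfolding PP_def X_def a7[OF k] by simp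
  finally show ?thesis .
qed

lemma uniq:
  "run P f w Q g \<Longrightarrow> 1 \<le> k \<Longrightarrow> k \<le> n \<Longrightarrow> P = PP k n \<Longrightarrow> f {1..k} = left_comb k
   \<Longrightarrow> (\<forall>i. k < i \<and> i \<le> n \<longrightarrow> f {i} = Leaf i) \<Longrightarrow> Q = {{1..n}} \<Longrightarrow> sorted_wrt (<) w
   \<Longrightarrow> g {1..n} = left_comb n"
proof (induction arbitrary: k rule: run.induct)
  case (run_nil P f)
  show ?case
  proof (cases "k = n")
    case True then show ?thesis using run_nil by simp
  next
    case False
    then have "{n} \<in> PP k n" using run_nil unfolding PP_def by auto
    then have "{n} \<in> {{1..n}}" using run_nil by metis
    then have "{n} = {1..n}" by blast
    then show ?thesis using run_nil False by (metis atLeastAtMost_singleton_iff le_antisym)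
  qed
next
  case (run_step A P B f w Q g)
  have fin: "\<forall>X\<in>merge P A B. finite X \<and> X \<noteq> {}"
    using run_step.prems(1,3) run_step.hyps(1,2) unfolding merge_def PP_def by auto
  have "Min ` merge P A B \<subseteq> Min ` Q \<union> set w"
    using run_mins[OF run_step.hyps(4) fin] .
  moreover have "Min ` Q = {1}"
  proof -
    have "Min {1..n} = (1::nat)" using run_step.prems(1,2) by (intro Min_eqI) auto
    thus ?thesis using run_step.prems(6) by simp
  qed
  ultimately have mins: "Min ` merge (PP k n) A B \<subseteq> insert 1 (set w)"
    using run_step.prems(3) by auto
  have lt: "\<forall>x\<in>set w. edge_label A B < x" using run_step.prems(7) by simp
  have AB: "(A = {1..k} \<and> B = {Suc k} \<or> A = {Suc k} \<and> B = {1..k}) \<and> Suc k \<le> n"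
    using key[OF _ _ run_step.hyps(3) run_step.prems(1) lt mins] run_step.hyps(1,2) run_step.prems(3)
    by blast
  have U: "A \<union> B = {1..Suc k}" using AB by (auto simp: atLeastAtMostSuc_conv)
  have M: "merge P A B = PP (Suc k) n"
    using AB merge_PP[OF run_step.prems(1)] run_step.prems(3) merge_sym by metis
  have fk: "f {Suc k} = Leaf (Suc k)" using run_step.prems(5) AB by auto
  have mk: "Min {1..k} = 1" using run_step.prems(1) by (intro Min_eqI) auto
  have S: "shuffle_mu f A B = left_comb (Suc k)"
    using AB fk mk run_step.prems(1,4) left_comb_Suc[OF run_step.prems(1)] unfolding shuffle_mu_def
    by auto
  show ?case
  proof (rule run_step.IH[of "Suc k"])
    show "merge P A B = PP (Suc k) n" by (rule M)
    show "(f(A \<union> B := shuffle_mu f A B)) {1..Suc k} = left_comb (Suc k)" using U S by simp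
    show "\<forall>i. Suc k < i \<and> i \<le> n \<longrightarrow> (f(A \<union> B := shuffle_mu f A B)) {i} = Leaf i"
    proof (intro allI impI)
      fix i assume i: "Suc k < i \<and> i \<le> n"
      have "1 \<in> {1..Suc k}" by simp
      hence "{i} \<noteq> {1..Suc k}" using i by auto
      thus "(f(A \<union> B := shuffle_mu f A B)) {i} = Leaf i" using U run_step.prems(5) i by auto
    qed
    show "sorted_wrt (<) w" using run_step.prems(7) by simp
  qed (use AB run_step.prems in auto)
qed


lemma exist:
  "1 \<le> k \<Longrightarrow> k \<le> n \<Longrightarrow> f {1..k} = left_comb k \<Longrightarrow> (\<forall>i. k < i \<and> i \<le> n \<longrightarrow> f {i} = Leaf i)
   \<Longrightarrow> \<exists>g. run (PP k n) f [Suc k..<Suc n] (top_part n) g \<and> g {1..n} = left_comb n"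
proof (induction "n - k" arbitrary: k f)
  case 0
  then have kn: "k = n" by simp
  have "PP k n = top_part n" unfolding PP_def top_part_def using kn by simp
  then show ?case using kn 0 run_nil by (metis upt_rec less_irrefl)
next
  case (Suc m)
  define f' where "f' = f({1..k} \<union> {Suc k} := shuffle_mu f {1..k} {Suc k})"
  have U: "{1..k} \<union> {Suc k} = {1..Suc k}" by (auto simp: atLeastAtMostSuc_conv)
  have mk: "Min {1..k} = 1" using Suc.prems by (intro Min_eqI) auto
  have S: "shuffle_mu f {1..k} {Suc k} = left_comb (Suc k)"
  proof -
    have "f {Suc k} = Leaf (Suc k)" using Suc.prems(4) Suc.hyps(2) by auto
    then show ?thesis
      using Suc.prems mk left_comb_Suc[OF Suc.prems(1)] unfolding shuffle_mu_def by auto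
  qed
  have "\<exists>g. run (PP (Suc k) n) f' [Suc (Suc k)..<Suc n] (top_part n) g \<and> g {1..n} = left_comb n"
  proof (rule Suc.hyps(1))
    show "m = n - Suc k" using Suc.hyps(2) by simp
    show "f' {1..Suc k} = left_comb (Suc k)" unfolding f'_def using U S by simp
    show "\<forall>i. Suc k < i \<and> i \<le> n \<longrightarrow> f' {i} = Leaf i"
    proof (intro allI impI)
      fix i assume i: "Suc k < i \<and> i \<le> n"
      have "1 \<in> {1..Suc k}" by simp
      hence "{i} \<noteq> {1..Suc k}" using i by auto
      thus "f' {i} = Leaf i" unfolding f'_def using U Suc.prems(4) i by auto
    qed
  qed (use Suc in auto)
  then obtain g where g: "run (PP (Suc k) n) f' [Suc (Suc k)..<Suc n] (top_part n) g" "g {1..n} = left_comb n"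
    by blast
  have kn: "Suc k \<le> n" using Suc.hyps(2) by simp
  have M: "merge (PP k n) {1..k} {Suc k} = PP (Suc k) n" using merge_PP[OF Suc.prems(1) kn] .
  have L: "edge_label {1..k} {Suc k} = Suc k" unfolding edge_label_def using mk by simp
  have A: "{1..k} \<in> PP k n" "{Suc k} \<in> PP k n" "{1..k} \<noteq> {Suc k}"
    unfolding PP_def using kn Suc.prems(1) by auto
  have "run (PP k n) f (edge_label {1..k} {Suc k} # [Suc (Suc k)..<Suc n]) (top_part n) g"
    using run_step[OF A] g(1) M unfolding f'_def by simp
  moreover have "Suc k # [Suc (Suc k)..<Suc n] = [Suc k..<Suc n]" using kn by (simp add: upt_conv_Cons)
  ultimately show ?case using g(2) L by metis
qed

theorem mainTheorem5:
  fixes n :: nat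
  assumes "n \<ge> 1"
  shows "pbw_basis n = {left_comb n}"
proof -
  have B: "bot_part n = PP 1 n" unfolding bot_part_def PP_def using assms by auto
  have f1: "leaves {1..1} = left_comb 1" unfolding leaves_def left_comb_def by simp
  have fi: "\<forall>i. 1 < i \<and> i \<le> n \<longrightarrow> leaves {i} = Leaf i" unfolding leaves_def by simp
  have "pbw_basis n \<subseteq> {left_comb n}"
  proof
    fix t assume "t \<in> pbw_basis n"
    then obtain w g where t: "t = g {1..n}" "run (bot_part n) leaves w (top_part n) g" "sorted_wrt (<) w"
      unfolding pbw_basis_def by blast
    show "t \<in> {left_comb n}"
      using uniq[where k=1, OF t(2) _ assms] t B f1 fi unfolding top_part_def by simp
  qed
  moreover have "left_comb n \<in> pbw_basis n"
  proof -
    obtain g where g: "run (PP 1 n) leaves [Suc 1..<Suc n] (top_part n) g" "g {1..n} = left_comb n"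
      using exist[OF _ assms f1 fi] by auto
    have "sorted_wrt (<) [Suc 1..<Suc n]" by (rule sorted_wrt_upt)
    hence "left_comb n = g {1..n} \<and> run (bot_part n) leaves [Suc 1..<Suc n] (top_part n) g
       \<and> sorted_wrt (<) [Suc 1..<Suc n]" using g B by simp
    then show ?thesis unfolding pbw_basis_def by blast
  qed
  ultimately show ?thesis by blast
qed

end
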